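(* Let $p\ge3$ be a prime and let $d\ge2$ be an integer. There exists $\Theta(d,p)$ such that whenever $T:[n_1]\times\dots\times[n_d]\to\mathbb{F}_p$ is an order-$d$ tensor with $\mathrm{tr}\,T\ge\Theta(d,p)$ and $S_1,\dots,S_d$ are subsets of $\mathbb{F}_p$ each containing at least two elements, the $d$-linear form $m$ associated with $T$ satisfies $m(S_1^{n_1}\times\dots\times S_d^{n_d})=\mathbb{F}_p$.
   Context: The $d$-linear form associated with $T$ is $m:\mathbb{F}_p^{n_1}\times\dots\times\mathbb{F}_p^{n_d}\to\mathbb{F}_p$, $m(x^1,\dots,x^d)=\sum_{(i_1,\dots,i_d)}T(i_1,\dots,i_d)x^1_{i_1}\cdots x^d_{i_d}$. The tensor rank $\mathrm{tr}\,T$ is the least $k\ge0$ such that there exist functions $a_{i,\alpha}:[n_\alpha]\to\mathbb{F}_p$ ($i\in[k],\alpha\in[d]$) with $T(x_1,\dots,x_d)=\sum_{i=1}^ka_{i,1}(x_1)\cdots a_{i,d}(x_d)$ for all $(x_1,\dots,x_d)$. *)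

theory Defs
  imports Main "HOL-Library.FuncSet" "HOL-Library.Cardinality" "HOL-Computational_Algebra.Primes"
begin

text \<open>An order-d tensor with dimensions n 0, ..., n (d-1) over a field 'a is a function
  on index tuples; index tuples are the extensional functions in
  PiE {0..<d} (\<lambda>a. {0..<n a}) (coordinates are 0-based).\<close>

definition tensor_indices :: "nat \<Rightarrow> (nat \<Rightarrow> nat) \<Rightarrow> (nat \<Rightarrow> nat) set" where
  "tensor_indices d n = PiE {0..<d} (\<lambda>a. {0..<n a})"

definition tensor_rank :: "nat \<Rightarrow> (nat \<Rightarrow> nat) \<Rightarrow> ((nat \<Rightarrow> nat) \<Rightarrow> 'a::field) \<Rightarrow> nat" where
  "tensor_rank d n T = (LEAST k. \<exists>f :: nat \<Rightarrow> nat \<Rightarrow> nat \<Rightarrow> 'a.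
      \<forall>i \<in> tensor_indices d n. T i = (\<Sum>r<k. \<Prod>a<d. f r a (i a)))"

definition multilinear_form :: "nat \<Rightarrow> (nat \<Rightarrow> nat) \<Rightarrow> ((nat \<Rightarrow> nat) \<Rightarrow> 'a::field)
    \<Rightarrow> (nat \<Rightarrow> nat \<Rightarrow> 'a) \<Rightarrow> 'a" where
  "multilinear_form d n T x = (\<Sum>i \<in> tensor_indices d n. T i * (\<Prod>a<d. x a (i a)))"

end

theory Submission
  imports Defs "HOL-Number_Theory.Residues"
begin

definition tiD :: "nat set \<Rightarrow> (nat \<Rightarrow> nat) \<Rightarrow> (nat \<Rightarrow> nat) set" where
  "tiD D n = PiE D (\<lambda>a. {..<n a})"

definition mfD :: "nat set \<Rightarrow> (nat \<Rightarrow> nat) \<Rightarrow> ((nat \<Rightarrow> nat) \<Rightarrow> 'a::field) \<Rightarrow> (nat \<Rightarrow> nat \<Rightarrow> 'a) \<Rightarrow> 'a" where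
  "mfD D n T x = (\<Sum>i \<in> tiD D n. T i * (\<Prod>a\<in>D. x a (i a)))"

definition contr :: "nat \<Rightarrow> (nat \<Rightarrow> nat) \<Rightarrow> ((nat \<Rightarrow> nat) \<Rightarrow> 'a::field) \<Rightarrow> (nat \<Rightarrow> 'a) \<Rightarrow> (nat \<Rightarrow> nat) \<Rightarrow> 'a" where
  "contr a n T y = (\<lambda>j. \<Sum>z<n a. T (j(a:=z)) * y z)"

lemma tiD_insert:
  assumes "a \<notin> D"
  shows "tiD (insert a D) n = (\<lambda>(y, g). g(a := y)) ` ({..<n a} \<times> tiD D n)"
  unfolding tiD_def using PiE_insert_eq[of a D "\<lambda>a. {..<n a}"] by simp

lemma mfD_remove:
  assumes "a \<in> D" "finite D"
  shows "mfD D n T x = mfD (D - {a}) n (contr a n T (x a)) x"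
proof -
  have D: "D = insert a (D - {a})" using assms by auto
  have inj: "inj_on (\<lambda>(y, g). g(a := y)) ({..<n a} \<times> tiD (D - {a}) n)"
    unfolding tiD_def using inj_combinator[of a "D - {a}" "\<lambda>a. {..<n a}"] by simp
  have "mfD D n T x = (\<Sum>i \<in> tiD (insert a (D - {a})) n. T i * (\<Prod>b\<in>insert a (D - {a}). x b (i b)))"
    unfolding mfD_def using D by simp
  also have "\<dots> = (\<Sum>(y,g) \<in> {..<n a} \<times> tiD (D - {a}) n. T (g(a:=y)) * (\<Prod>b\<in>insert a (D - {a}). x b ((g(a:=y)) b)))"
    by (subst tiD_insert, simp, subst sum.reindex[OF inj], simp add: case_prod_unfold)
  also have "\<dots> = (\<Sum>(y,g) \<in> {..<n a} \<times> tiD (D - {a}) n. T (g(a:=y)) * x a y * (\<Prod>b\<in>D - {a}. x b (g b)))"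
  proof (rule sum.cong, simp, clarify)
    fix y g
    have "(\<Prod>b\<in>insert a (D - {a}). x b ((g(a:=y)) b)) = x a y * (\<Prod>b\<in>D - {a}. x b ((g(a:=y)) b))"
      using assms by (subst prod.insert, auto)
    also have "(\<Prod>b\<in>D - {a}. x b ((g(a:=y)) b)) = (\<Prod>b\<in>D - {a}. x b (g b))"
      by (rule prod.cong, auto)
    finally show "T (g(a:=y)) * (\<Prod>b\<in>insert a (D - {a}). x b ((g(a:=y)) b)) = T (g(a:=y)) * x a y * (\<Prod>b\<in>D - {a}. x b (g b))"
      by (simp add: mult.assoc)
  qed
  also have "\<dots> = (\<Sum>g \<in> tiD (D - {a}) n. \<Sum>y<n a. T (g(a:=y)) * x a y * (\<Prod>b\<in>D - {a}. x b (g b)))"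
    by (subst sum.cartesian_product[symmetric], subst sum.swap, simp)
  also have "\<dots> = mfD (D - {a}) n (contr a n T (x a)) x"
    unfolding mfD_def contr_def by (simp add: sum_distrib_right)
  finally show ?thesis .
qed

lemma translate_closed:
  fixes u :: "'a::{field,finite}"
  assumes p: "prime p" "CARD('a) = p" and u: "u \<noteq> 0" and V: "v \<in> V"
    and cl: "\<And>w. w \<in> V \<Longrightarrow> w + u \<in> V"
  shows "V = UNIV"
proof -
  have "CHAR('a) dvd p" using CHAR_dvd_CARD[where 'a='a] p by simp
  moreover have "CHAR('a) \<noteq> 1" by simp
  ultimately have ch: "CHAR('a) = p" using p prime_nat_iff by blast
  have mem: "v + of_nat j * u \<in> V" for j
    by (induction j) (auto simp: V algebra_simps dest: cl)
  have inj: "inj_on (\<lambda>j. v + of_nat j * u) {..<p}"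
  proof (rule inj_onI)
    fix i j assume ij: "i \<in> {..<p}" "j \<in> {..<p}" "v + of_nat i * u = v + of_nat j * (u::'a)"
    hence "of_nat i = (of_nat j :: 'a)" using u by simp
    hence "[i = j] (mod CHAR('a))" by (simp add: of_nat_eq_iff_cong_CHAR)
    thus "i = j" using ij ch by (simp add: cong_def)
  qed
  have "card ((\<lambda>j. v + of_nat j * u) ` {..<p}) = CARD('a)"
    using card_image[OF inj] p by simp
  hence img: "(\<lambda>j. v + of_nat j * u) ` {..<p} = UNIV"
    by (simp add: card_subset_eq)
  have "w \<in> V" for w
  proof -
    have "w \<in> (\<lambda>j. v + of_nat j * u) ` {..<p}" using img by simp
    then obtain j where "w = v + of_nat j * u" by blast
    thus "w \<in> V" using mem by simp
  qed
  thus ?thesis by auto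
qed


lemma sumset_step:
  fixes u :: "'a::{field,finite}"
  assumes p: "prime p" "CARD('a) = p" and u: "u \<noteq> 0" and V: "V \<noteq> {}"
  shows "min p (card V + 1) \<le> card (V \<union> (\<lambda>v. v + u) ` V)"
proof (cases "(\<lambda>v. v + u) ` V \<subseteq> V")
  case True
  obtain v where "v \<in> V" using V by auto
  hence "V = UNIV" using translate_closed[OF p u, of v V] True by auto
  thus ?thesis using p by simp
next
  case False
  hence "V \<subset> V \<union> (\<lambda>v. v + u) ` V" by auto
  hence "card V < card (V \<union> (\<lambda>v. v + u) ` V)" by (rule psubset_card_mono[rotated]) simp
  thus ?thesis by simp
qed

lemma linear_card:
  fixes w :: "nat \<Rightarrow> 'a::{field,finite}"
  assumes p: "prime p" "CARD('a) = p" and st: "s \<noteq> t" and J: "finite J" "J \<subseteq> {..<N}"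
    and w: "\<forall>j\<in>J. w j \<noteq> 0"
  shows "min p (card J + 1) \<le> card {\<Sum>j<N. w j * y j | y. (\<forall>j<N. y j \<in> {s,t}) \<and> (\<forall>j. j \<notin> J \<longrightarrow> y j = s)}"
  using J w
proof (induction J rule: finite_induct)
  case empty
  have "(\<Sum>j<N. w j * s) \<in> {\<Sum>j<N. w j * y j | y. (\<forall>j<N. y j \<in> {s,t}) \<and> (\<forall>j. j \<notin> {} \<longrightarrow> y j = s)}"
    by (rule CollectI, rule exI[of _ "\<lambda>_. s"]) auto
  hence "{\<Sum>j<N. w j * y j | y. (\<forall>j<N. y j \<in> {s,t}) \<and> (\<forall>j. j \<notin> {} \<longrightarrow> y j = s)} \<noteq> {}" by blast
  hence "card {\<Sum>j<N. w j * y j | y. (\<forall>j<N. y j \<in> {s,t}) \<and> (\<forall>j. j \<notin> {} \<longrightarrow> y j = s)} \<ge> 1"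
    by (simp add: Suc_le_eq card_gt_0_iff)
  thus ?case using p prime_gt_1_nat by simp
next
  case (insert j0 J)
  define V where "V = {\<Sum>j<N. w j * y j | y. (\<forall>j<N. y j \<in> {s,t}) \<and> (\<forall>j. j \<notin> J \<longrightarrow> y j = s)}"
  define V' where "V' = {\<Sum>j<N. w j * y j | y. (\<forall>j<N. y j \<in> {s,t}) \<and> (\<forall>j. j \<notin> insert j0 J \<longrightarrow> y j = s)}"
  define u where "u = w j0 * (t - s)"
  have u: "u \<noteq> 0" using insert st by (simp add: u_def)
  have IH: "min p (card J + 1) \<le> card V" using insert V_def by simp
  have j0: "j0 < N" using insert by auto
  have sub: "V \<union> (\<lambda>v. v + u) ` V \<subseteq> V'"
  proof
    fix v assume "v \<in> V \<union> (\<lambda>v. v + u) ` V"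
    then obtain y where y: "\<forall>j<N. y j \<in> {s,t}" "\<forall>j. j \<notin> J \<longrightarrow> y j = s"
      and v: "v = (\<Sum>j<N. w j * y j) \<or> v = (\<Sum>j<N. w j * y j) + u"
      unfolding V_def by blast
    show "v \<in> V'"
    proof (cases "v = (\<Sum>j<N. w j * y j)")
      case True
      thus ?thesis unfolding V'_def using y by blast
    next
      case False
      hence v: "v = (\<Sum>j<N. w j * y j) + u" using v by auto
      have yj0: "y j0 = s" using y insert by auto
      define y' where "y' = y(j0 := t)"
      have "(\<Sum>j<N. w j * y' j) = (\<Sum>j<N. w j * y j + (if j = j0 then u else 0))"
        by (rule sum.cong) (auto simp: y'_def u_def yj0 algebra_simps)
      also have "\<dots> = (\<Sum>j<N. w j * y j) + u"
        using j0 by (simp add: sum.distrib)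
      finally have "v = (\<Sum>j<N. w j * y' j)" using v by simp
      moreover have "(\<forall>j<N. y' j \<in> {s,t}) \<and> (\<forall>j. j \<notin> insert j0 J \<longrightarrow> y' j = s)"
        using y by (auto simp: y'_def)
      ultimately show ?thesis unfolding V'_def by blast
    qed
  qed
  have "V \<noteq> {}" using IH p prime_gt_1_nat by (auto simp: min_def split: if_splits)
  hence "min p (card V + 1) \<le> card V'"
    using sumset_step[OF p u] card_mono[OF _ sub] by (meson finite order_trans)
  moreover have "card (insert j0 J) = card J + 1" using insert by simp
  ultimately show ?case using IH unfolding V'_def by (auto simp: min_def split: if_splits)
qed

lemma linear_allv:
  fixes w :: "nat \<Rightarrow> 'a::{field,finite}"
  assumes p: "prime p" "CARD('a) = p" and st: "s \<noteq> t" and J: "finite J" "J \<subseteq> {..<N}"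
    and w: "\<forall>j\<in>J. w j \<noteq> 0" and cJ: "p \<le> card J + 1"
  shows "\<exists>y. (\<forall>j<N. y j \<in> {s,t}) \<and> (\<Sum>j<N. w j * y j) = v"
proof -
  let ?V = "{\<Sum>j<N. w j * y j | y. (\<forall>j<N. y j \<in> {s,t}) \<and> (\<forall>j. j \<notin> J \<longrightarrow> y j = s)}"
  have "p \<le> card ?V" using linear_card[OF p st J w] cJ by simp
  hence "card ?V = CARD('a)" using p card_mono[of UNIV ?V] by simp
  hence "?V = UNIV" by (simp add: card_subset_eq)
  hence "v \<in> ?V" by simp
  thus ?thesis by blast
qed


lemma averaging:
  assumes I: "finite I"
    and P: "\<And>l L. l \<in> I \<Longrightarrow> L \<subseteq> I - {l} \<Longrightarrow> P L l \<or> P (insert l L) l"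
  shows "\<exists>L\<subseteq>I. card I \<le> 2 * card {l\<in>I. P L l}"
proof (rule ccontr)
  assume nt: "\<not> ?thesis"
  have lt: "2 * card {l\<in>I. P L l} < card I" if "L \<subseteq> I" for L
    using that nt by (meson not_le)
  define k where "k = card I"
  have k: "k \<ge> 1" using lt[of "{}"] k_def by simp
  have each: "2 ^ (k - 1) \<le> card {L \<in> Pow I. P L l}" if l: "l \<in> I" for l
  proof -
    define f where "f L = (if P L l then L else insert l L)" for L
    have "inj_on f (Pow (I - {l}))"
    proof (rule inj_onI)
      fix L1 L2 assume "L1 \<in> Pow (I - {l})" "L2 \<in> Pow (I - {l})" "f L1 = f L2"
      hence a: "f L1 - {l} = f L2 - {l}" "l \<notin> L1" "l \<notin> L2" by auto
      have "f L - {l} = L" if "l \<notin> L" for L unfolding f_def using that by auto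
      thus "L1 = L2" using a by metis
    qed
    moreover have "f ` Pow (I - {l}) \<subseteq> {L \<in> Pow I. P L l}"
    proof
      fix M assume "M \<in> f ` Pow (I - {l})"
      then obtain L where L: "L \<subseteq> I - {l}" and M: "M = f L" by blast
      have "insert l L \<subseteq> I" using L l by blast
      thus "M \<in> {L \<in> Pow I. P L l}" using P[OF l L] L unfolding M f_def by auto
    qed
    ultimately have "card (Pow (I - {l})) \<le> card {L \<in> Pow I. P L l}"
      by (rule card_inj_on_le) (use I in auto)
    moreover have "card (Pow (I - {l})) = 2 ^ (k - 1)"
      using I l by (simp add: card_Pow k_def)
    ultimately show ?thesis by simp
  qed
  have "(\<Sum>L\<in>Pow I. card {l\<in>I. P L l}) = (\<Sum>L\<in>Pow I. \<Sum>l\<in>I. (if P L l then 1 else 0::nat))"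
    using I by (simp add: sum.If_cases Int_def conj_commute)
  also have "\<dots> = (\<Sum>l\<in>I. \<Sum>L\<in>Pow I. (if P L l then 1 else 0::nat))"
    by (rule sum.swap)
  also have "\<dots> = (\<Sum>l\<in>I. card {L \<in> Pow I. P L l})"
    using I by (simp add: sum.If_cases Int_def)
  also have "\<dots> \<ge> (\<Sum>l\<in>I. 2 ^ (k - 1))"
    by (rule sum_mono) (rule each)
  finally have ge: "k * 2 ^ (k - 1) \<le> (\<Sum>L\<in>Pow I. card {l\<in>I. P L l})" by (simp add: k_def)
  have "2 * (\<Sum>L\<in>Pow I. card {l\<in>I. P L l}) = (\<Sum>L\<in>Pow I. 2 * card {l\<in>I. P L l})"
    by (simp add: sum_distrib_left)
  also have "\<dots> \<le> (\<Sum>L\<in>Pow I. k - 1)"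
  proof (rule sum_mono)
    fix L assume "L \<in> Pow I"
    hence "2 * card {l\<in>I. P L l} < k" using lt k_def by auto
    thus "2 * card {l\<in>I. P L l} \<le> k - 1" by simp
  qed
  also have "\<dots> = 2 ^ k * (k - 1)" using I by (simp add: card_Pow k_def)
  finally have "2 * (k * 2 ^ (k - 1)) \<le> 2 ^ k * (k - 1)" using ge by linarith
  moreover have "2 * (k * 2 ^ (k - 1)) = 2 ^ k * k" using k
    by (cases k) auto
  ultimately have "2 ^ k * k \<le> 2 ^ k * (k - 1)" by linarith
  hence "k \<le> k - 1" by simp
  thus False using k by simp
qed


definition allv :: "nat set \<Rightarrow> (nat \<Rightarrow> nat) \<Rightarrow> ((nat \<Rightarrow> nat) \<Rightarrow> 'a::field) \<Rightarrow> (nat \<Rightarrow> 'a set) \<Rightarrow> bool" where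
  "allv D n T S = (\<forall>v. \<exists>x. (\<forall>a\<in>D. \<forall>j<n a. x a j \<in> S a) \<and> mfD D n T x = v)"

definition matching :: "nat set \<Rightarrow> (nat \<Rightarrow> nat) \<Rightarrow> ((nat \<Rightarrow> nat) \<Rightarrow> 'a::field) \<Rightarrow> 'b set \<Rightarrow> ('b \<Rightarrow> nat \<Rightarrow> nat) \<Rightarrow> bool" where
  "matching D n T I \<tau> = (finite I \<and> (\<forall>l\<in>I. \<tau> l \<in> tiD D n \<and> T (\<tau> l) \<noteq> 0) \<and> (\<forall>a\<in>D. inj_on (\<lambda>l. \<tau> l a) I))"

lemma mfD_cong_x:
  assumes "\<And>a. a \<in> D \<Longrightarrow> x a = x' a"
  shows "mfD D n T x = mfD D n T x'"
  unfolding mfD_def using assms tiD_def by (intro sum.cong refl arg_cong2[where f="(*)"] prod.cong) auto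

lemma tiD_empty: "tiD {} n = {\<lambda>_. undefined}"
  by (simp add: tiD_def)

lemma mfD_empty: "mfD {} n T x = T (\<lambda>_. undefined)"
  by (simp add: mfD_def tiD_empty)

lemma matching_allv:
  fixes T :: "(nat \<Rightarrow> nat) \<Rightarrow> 'a::{field,finite}"
  assumes p: "prime p" "CARD('a) = p"
  shows "finite D \<Longrightarrow> card D = Suc k \<Longrightarrow> (\<forall>a\<in>D. s a \<in> S a \<and> t a \<in> S a \<and> s a \<noteq> t a)
    \<Longrightarrow> matching D n T I \<tau> \<Longrightarrow> 2^(Suc k) * p \<le> card I \<Longrightarrow> allv D n T S"
proof (induction k arbitrary: D T I \<tau>)
  case 0
  then obtain a where D: "D = {a}" using card_1_singletonE[of D] by auto
  have st: "s a \<noteq> t a" "s a \<in> S a" "t a \<in> S a" using 0 D by auto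
  have mI: "finite I" "\<And>l. l \<in> I \<Longrightarrow> \<tau> l \<in> tiD D n \<and> T (\<tau> l) \<noteq> 0" "inj_on (\<lambda>l. \<tau> l a) I"
    using 0(4) D unfolding matching_def by auto
  define J where "J = (\<lambda>l. \<tau> l a) ` I"
  define w where "w z = T ((\<lambda>_. undefined)(a := z))" for z
  have tau: "\<tau> l = (\<lambda>_. undefined)(a := \<tau> l a)" "\<tau> l a < n a" if "l \<in> I" for l
  proof -
    have "\<tau> l \<in> PiE {a} (\<lambda>a. {..<n a})" using mI(2)[OF that] D by (simp add: tiD_def)
    thus "\<tau> l = (\<lambda>_. undefined)(a := \<tau> l a)" "\<tau> l a < n a"
      by (auto simp: PiE_iff extensional_def)
  qed
  have J: "finite J" "J \<subseteq> {..<n a}" "\<forall>j\<in>J. w j \<noteq> 0"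
    using mI tau unfolding J_def w_def by auto
  have cJ: "card J = card I" unfolding J_def using mI(3) by (simp add: card_image)
  have "p \<le> card J + 1" using cJ 0(5) by simp
  show ?case unfolding allv_def
  proof
    fix v
    obtain y where y: "\<forall>j<n a. y j \<in> {s a, t a}" "(\<Sum>j<n a. w j * y j) = v"
      using linear_allv[OF p st(1) J \<open>p \<le> card J + 1\<close>] by blast
    have "mfD D n T (\<lambda>_. y) = (\<Sum>j<n a. w j * y j)"
      using mfD_remove[of a D n T "\<lambda>_. y"] D by (simp add: mfD_empty contr_def w_def)
    thus "\<exists>x. (\<forall>b\<in>D. \<forall>j<n b. x b j \<in> S b) \<and> mfD D n T x = v"
      using y st D by (intro exI[of _ "\<lambda>_. y"]) auto
  qed
next
  case (Suc k)
  obtain a where a: "a \<in> D" using Suc.prems(2) by fastforce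
  define D' where "D' = D - {a}"
  have D': "finite D'" "card D' = Suc k" "a \<notin> D'" using Suc.prems(1,2) a by (auto simp: D'_def)
  have st: "s a \<noteq> t a" "s a \<in> S a" "t a \<in> S a" using Suc.prems(3) a by auto
  have mI: "finite I" "\<And>l. l \<in> I \<Longrightarrow> \<tau> l \<in> tiD D n \<and> T (\<tau> l) \<noteq> 0" "\<And>b. b \<in> D \<Longrightarrow> inj_on (\<lambda>l. \<tau> l b) I"
    using Suc.prems(4) unfolding matching_def by auto
  define xL where "xL L z = (if z \<in> (\<lambda>l. \<tau> l a) ` L then t a else s a)" for L z
  define TL where "TL L = contr a n T (xL L)" for L
  define \<sigma> where "\<sigma> l = (\<tau> l)(a := undefined)" for l
  have diff: "TL (insert l L) (\<sigma> l) - TL L (\<sigma> l) = T (\<tau> l) * (t a - s a)"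
    if l: "l \<in> I" and L: "L \<subseteq> I - {l}" for l L
  proof -
    have la: "\<tau> l a < n a" using mI(2)[OF l] a by (auto simp: tiD_def PiE_iff)
    have nin: "\<tau> l a \<notin> (\<lambda>l. \<tau> l a) ` L"
    proof
      assume "\<tau> l a \<in> (\<lambda>l. \<tau> l a) ` L"
      then obtain l' where "l' \<in> L" "\<tau> l' a = \<tau> l a" by auto
      thus False using mI(3)[OF a] L l by (auto dest: inj_onD)
    qed
    have "TL (insert l L) (\<sigma> l) - TL L (\<sigma> l)
        = (\<Sum>z<n a. T ((\<sigma> l)(a:=z)) * (xL (insert l L) z - xL L z))"
      by (simp add: TL_def contr_def sum_subtractf algebra_simps)
    also have "\<dots> = (\<Sum>z<n a. (if z = \<tau> l a then T ((\<sigma> l)(a:=z)) * (t a - s a) else 0))"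
      by (rule sum.cong) (auto simp: xL_def nin)
    also have "\<dots> = T ((\<sigma> l)(a:=\<tau> l a)) * (t a - s a)" using la by simp
    also have "(\<sigma> l)(a:=\<tau> l a) = \<tau> l" by (simp add: \<sigma>_def)
    finally show ?thesis .
  qed
  have "\<exists>L\<subseteq>I. card I \<le> 2 * card {l\<in>I. TL L (\<sigma> l) \<noteq> 0}"
  proof (rule averaging[OF mI(1)])
    fix l L assume l: "l \<in> I" and L: "L \<subseteq> I - {l}"
    have "T (\<tau> l) * (t a - s a) \<noteq> 0" using mI(2)[OF l] st by simp
    thus "TL L (\<sigma> l) \<noteq> 0 \<or> TL (insert l L) (\<sigma> l) \<noteq> 0" using diff[OF l L] by auto
  qed
  then obtain L where L: "L \<subseteq> I" "card I \<le> 2 * card {l\<in>I. TL L (\<sigma> l) \<noteq> 0}" by blast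
  define G where "G = {l\<in>I. TL L (\<sigma> l) \<noteq> 0}"
  have m1: "finite G" using mI(1) by (simp add: G_def)
  have m2: "\<sigma> l \<in> tiD D' n \<and> TL L (\<sigma> l) \<noteq> 0" if "l \<in> G" for l
  proof -
    have l: "l \<in> I" "TL L (\<sigma> l) \<noteq> 0" using that by (auto simp: G_def)
    have "\<tau> l \<in> PiE D (\<lambda>a. {..<n a})" using mI(2)[OF l(1)] by (simp add: tiD_def)
    hence "\<sigma> l \<in> PiE D' (\<lambda>a. {..<n a})"
      by (auto simp: PiE_iff extensional_def \<sigma>_def D'_def)
    thus "\<sigma> l \<in> tiD D' n \<and> TL L (\<sigma> l) \<noteq> 0" using l by (simp add: tiD_def)
  qed
  have m3: "inj_on (\<lambda>l. \<sigma> l b) G" if b: "b \<in> D'" for b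
  proof -
    have "inj_on (\<lambda>l. \<tau> l b) G" using mI(3)[of b] b by (auto simp: D'_def G_def intro: inj_on_subset)
    moreover have "(\<lambda>l. \<sigma> l b) = (\<lambda>l. \<tau> l b)" using b D' by (auto simp: \<sigma>_def)
    ultimately show "inj_on (\<lambda>l. \<sigma> l b) G" by simp
  qed
  have mG: "matching D' n (TL L) G \<sigma>"
    unfolding matching_def using m1 m2 m3 by blast
  have cG: "2^(Suc k) * p \<le> card G" using L(2) Suc.prems(5) by (simp add: G_def)
  have sD': "\<forall>b\<in>D'. s b \<in> S b \<and> t b \<in> S b \<and> s b \<noteq> t b" using Suc.prems(3) by (auto simp: D'_def)
  have av: "allv D' n (TL L) S" using Suc.IH[OF D'(1,2) sD' mG cG] .
  show ?case unfolding allv_def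
  proof
    fix v
    obtain x where x: "\<forall>b\<in>D'. \<forall>j<n b. x b j \<in> S b" "mfD D' n (TL L) x = v"
      using av unfolding allv_def by blast
    define x' where "x' = x(a := xL L)"
    have "mfD D n T x' = mfD D' n (TL L) x'"
      using mfD_remove[OF a Suc.prems(1), of n T x'] by (simp add: D'_def TL_def x'_def)
    also have "\<dots> = mfD D' n (TL L) x"
      by (rule mfD_cong_x) (use D' in \<open>auto simp: x'_def\<close>)
    finally have "mfD D n T x' = v" using x by simp
    moreover have "\<forall>b\<in>D. \<forall>j<n b. x' b j \<in> S b"
      using x(1) st by (auto simp: x'_def D'_def xL_def)
    ultimately show "\<exists>x. (\<forall>b\<in>D. \<forall>j<n b. x b j \<in> S b) \<and> mfD D n T x = v" by blast
  qed
qed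


definition hasdec :: "nat set \<Rightarrow> (nat \<Rightarrow> nat) \<Rightarrow> ((nat \<Rightarrow> nat) \<Rightarrow> 'a::field) \<Rightarrow> nat \<Rightarrow> bool" where
  "hasdec D n T m = (\<exists>f::nat \<Rightarrow> nat \<Rightarrow> nat \<Rightarrow> 'a. \<forall>i\<in>tiD D n. T i = (\<Sum>r<m. \<Prod>a\<in>D. f r a (i a)))"

lemma hasdec_cong:
  assumes "hasdec D n T m" "\<And>i. i \<in> tiD D n \<Longrightarrow> T i = T' i"
  shows "hasdec D n T' m"
  using assms unfolding hasdec_def by metis

lemma sum_lessThan_add_split:
  fixes m1 m2 :: nat
  shows "(\<Sum>r<m1+m2. g r) = (\<Sum>r<m1. g r) + (\<Sum>r<m2. g (m1 + r))"
  by (induction m2) (auto simp: add.assoc)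

lemma hasdec_add:
  assumes "hasdec D n T1 m1" "hasdec D n T2 m2"
  shows "hasdec D n (\<lambda>i. T1 i + T2 i) (m1 + m2)"
proof -
  obtain f1 where f1: "\<forall>i\<in>tiD D n. T1 i = (\<Sum>r<m1. \<Prod>a\<in>D. f1 r a (i a))"
    using assms(1) unfolding hasdec_def by blast
  obtain f2 where f2: "\<forall>i\<in>tiD D n. T2 i = (\<Sum>r<m2. \<Prod>a\<in>D. f2 r a (i a))"
    using assms(2) unfolding hasdec_def by blast
  define f where "f r = (if r < m1 then f1 r else f2 (r - m1))" for r
  have "T1 i + T2 i = (\<Sum>r<m1 + m2. \<Prod>a\<in>D. f r a (i a))" if "i \<in> tiD D n" for i
    using f1 f2 that by (simp add: sum_lessThan_add_split f_def)
  thus ?thesis unfolding hasdec_def by blast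
qed

lemma hasdec_zero: "hasdec D n (\<lambda>_. 0) 0"
  unfolding hasdec_def by simp

lemma hasdec_sum:
  assumes "finite A" "\<And>c. c \<in> A \<Longrightarrow> hasdec D n (P c) (m c)"
  shows "hasdec D n (\<lambda>i. \<Sum>c\<in>A. P c i) (\<Sum>c\<in>A. m c)"
  using assms
proof (induction A rule: finite_induct)
  case empty
  then show ?case using hasdec_zero by simp
next
  case (insert c A)
  have "hasdec D n (\<lambda>i. P c i + (\<Sum>c\<in>A. P c i)) (m c + (\<Sum>c\<in>A. m c))"
    using insert by (intro hasdec_add) auto
  thus ?case using insert by simp
qed

lemma hasdec_scale:
  assumes "hasdec D n T m" "a0 \<in> D" "finite D"
  shows "hasdec D n (\<lambda>i. c * T i) m"
proof -
  obtain f where f: "\<forall>i\<in>tiD D n. T i = (\<Sum>r<m. \<Prod>a\<in>D. f r a (i a))"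
    using assms(1) unfolding hasdec_def by blast
  define g where "g r b = (if b = a0 then (\<lambda>z. c * f r b z) else f r b)" for r b
  have "c * T i = (\<Sum>r<m. \<Prod>a\<in>D. g r a (i a))" if "i \<in> tiD D n" for i
  proof -
    have "(\<Prod>a\<in>D. g r a (i a)) = c * (\<Prod>a\<in>D. f r a (i a))" for r
    proof -
      have "(\<Prod>a\<in>D. g r a (i a)) = g r a0 (i a0) * (\<Prod>a\<in>D - {a0}. g r a (i a))"
        using assms by (simp add: prod.remove)
      also have "(\<Prod>a\<in>D - {a0}. g r a (i a)) = (\<Prod>a\<in>D - {a0}. f r a (i a))"
        by (rule prod.cong) (auto simp: g_def)
      also have "(\<Prod>a\<in>D. f r a (i a)) = f r a0 (i a0) * (\<Prod>a\<in>D - {a0}. f r a (i a))"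
        using assms by (simp add: prod.remove)
      ultimately show ?thesis by (simp add: g_def)
    qed
    thus ?thesis using f that by (simp add: sum_distrib_left)
  qed
  thus ?thesis unfolding hasdec_def by blast
qed

lemma hasdec_single:
  assumes "D = {a}"
  shows "hasdec D n T 1"
proof -
  define f where "f (r::nat) (b::nat) z = T ((\<lambda>_. undefined)(a := z))" for r b z
  have "T i = (\<Sum>r<1. \<Prod>b\<in>D. f r b (i b))" if "i \<in> tiD D n" for i
  proof -
    have "i = (\<lambda>_. undefined)(a := i a)"
      using that assms by (auto simp: tiD_def PiE_iff extensional_def)
    thus ?thesis using assms by (simp add: f_def)
  qed
  thus ?thesis unfolding hasdec_def by blast
qed

lemma hasdec_lift:
  assumes D: "finite D" "a \<in> D" and h: "hasdec (D - {a}) n (\<lambda>j. T (j(a:=v))) m"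
  shows "hasdec D n (\<lambda>i. if i a = v \<and> (\<forall>b\<in>D-{a}. R b (i b)) then T i else 0) m"
proof -
  obtain f where f: "\<forall>j\<in>tiD (D - {a}) n. T (j(a:=v)) = (\<Sum>r<m. \<Prod>b\<in>D - {a}. f r b (j b))"
    using h unfolding hasdec_def by blast
  define g where "g r b = (if b = a then (\<lambda>z. if z = v then 1 else 0) else (\<lambda>z. f r b z * (if R b z then 1 else 0)))" for r b
  have "(if i a = v \<and> (\<forall>b\<in>D-{a}. R b (i b)) then T i else 0) = (\<Sum>r<m. \<Prod>b\<in>D. g r b (i b))"
    if i: "i \<in> tiD D n" for i
  proof -
    have ji: "i(a := undefined) \<in> tiD (D - {a}) n"
      using i by (auto simp: tiD_def PiE_iff extensional_def)
    have "T ((i(a:=undefined))(a:=v)) = (\<Sum>r<m. \<Prod>b\<in>D - {a}. f r b ((i(a:=undefined)) b))"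
      using f ji by blast
    also have "\<dots> = (\<Sum>r<m. \<Prod>b\<in>D - {a}. f r b (i b))"
      by (intro sum.cong prod.cong) auto
    finally have Ti: "T (i(a:=v)) = (\<Sum>r<m. \<Prod>b\<in>D - {a}. f r b (i b))" by simp
    have pr: "(\<Prod>b\<in>D. g r b (i b)) = (if i a = v then 1 else 0) * ((\<Prod>b\<in>D - {a}. f r b (i b)) * (\<Prod>b\<in>D - {a}. if R b (i b) then 1 else 0))" for r
    proof -
      have "(\<Prod>b\<in>D. g r b (i b)) = g r a (i a) * (\<Prod>b\<in>D - {a}. g r b (i b))"
        using D by (simp add: prod.remove)
      also have "(\<Prod>b\<in>D - {a}. g r b (i b)) = (\<Prod>b\<in>D - {a}. f r b (i b) * (if R b (i b) then 1 else 0))"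
        by (rule prod.cong) (auto simp: g_def)
      finally show ?thesis by (simp add: g_def prod.distrib)
    qed
    have mask: "(\<Prod>b\<in>D - {a}. if R b (i b) then 1 else (0::'a)) = (if (\<forall>b\<in>D-{a}. R b (i b)) then 1 else 0)"
    proof (cases "\<forall>b\<in>D-{a}. R b (i b)")
      case True thus ?thesis by simp
    next
      case False
      then obtain b where "b \<in> D - {a}" "\<not> R b (i b)" by blast
      thus ?thesis using D by (subst prod_zero) auto
    qed
    show ?thesis
    proof (cases "i a = v \<and> (\<forall>b\<in>D-{a}. R b (i b))")
      case True
      hence "i(a:=v) = i" by auto
      thus ?thesis using True Ti pr mask by simp
    next
      case False
      thus ?thesis using pr mask by auto
    qed
  qed
  thus ?thesis unfolding hasdec_def by blast
qed


lemma hasdec_cover: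
  assumes D: "finite D" and C: "\<And>a. a \<in> D \<Longrightarrow> finite (C a)"
    and cov: "\<And>i. i \<in> tiD D n \<Longrightarrow> T i \<noteq> 0 \<Longrightarrow> \<exists>b\<in>D. i b \<in> C b"
    and sl: "\<And>c. c \<in> Sigma D C \<Longrightarrow> hasdec (D - {fst c}) n (\<lambda>j. T (j(fst c := snd c))) (mm c)"
  shows "hasdec D n T (\<Sum>c\<in>Sigma D C. mm c)"
proof -
  define P where "P c i = (if i (fst c) = snd c \<and> (\<forall>b\<in>D-{fst c}. (\<lambda>b z. b < fst c \<longrightarrow> z \<notin> C b) b (i b)) then T i else 0)" for c i
  have fin: "finite (Sigma D C)" using D C by auto
  have "hasdec D n (\<lambda>i. \<Sum>c\<in>Sigma D C. P c i) (\<Sum>c\<in>Sigma D C. mm c)"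
  proof (rule hasdec_sum[OF fin])
    fix c assume c: "c \<in> Sigma D C"
    show "hasdec D n (P c) (mm c)"
      unfolding P_def using hasdec_lift[OF D _ sl[OF c]] c by auto
  qed
  moreover have "(\<Sum>c\<in>Sigma D C. P c i) = T i" if i: "i \<in> tiD D n" for i
  proof (cases "T i = 0")
    case True
    have "P c i = 0" for c using True by (simp add: P_def)
    thus ?thesis using True by simp
  next
    case False
    define a0 where "a0 = (LEAST b. b \<in> D \<and> i b \<in> C b)"
    obtain b0 where b0: "b0 \<in> D" "i b0 \<in> C b0" using cov[OF i False] by blast
    have a0: "a0 \<in> D" "i a0 \<in> C a0" using LeastI[of "\<lambda>b. b \<in> D \<and> i b \<in> C b", OF conjI[OF b0]]
      by (auto simp: a0_def)
    have a0le: "a0 \<le> b" if "b \<in> D" "i b \<in> C b" for b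
      using Least_le[of "\<lambda>b. b \<in> D \<and> i b \<in> C b" b] that by (simp add: a0_def)
    have "P c i = (if c = (a0, i a0) then T i else 0)" if c: "c \<in> Sigma D C" for c
    proof (cases c)
      case (Pair a v)
      have av: "a \<in> D" "v \<in> C a" using c Pair by auto
      have "(i a = v \<and> (\<forall>b\<in>D-{a}. b < a \<longrightarrow> i b \<notin> C b)) \<longleftrightarrow> (a = a0 \<and> v = i a0)"
      proof
        assume h: "i a = v \<and> (\<forall>b\<in>D-{a}. b < a \<longrightarrow> i b \<notin> C b)"
        have "a0 \<le> a" using a0le av h by auto
        moreover have "\<not> a0 < a" using h a0 by auto
        ultimately show "a = a0 \<and> v = i a0" using h by auto
      next
        assume h: "a = a0 \<and> v = i a0"
        show "i a = v \<and> (\<forall>b\<in>D-{a}. b < a \<longrightarrow> i b \<notin> C b)"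
          using h a0le by force
      qed
      thus ?thesis unfolding P_def Pair by auto
    qed
    hence "(\<Sum>c\<in>Sigma D C. P c i) = (\<Sum>c\<in>Sigma D C. if c = (a0, i a0) then T i else 0)"
      by (rule sum.cong[OF refl])
    also have "\<dots> = T i" using fin a0 by (simp add: sum.delta')
    finally show ?thesis .
  qed
  ultimately show ?thesis by (rule hasdec_cong) simp
qed

lemma allv_lift:
  assumes D: "finite D" "a \<in> D" and y: "\<forall>z<n a. y z \<in> S a"
    and av: "allv (D - {a}) n (contr a n T y) S"
  shows "allv D n T S"
  unfolding allv_def
proof
  fix v
  obtain x where x: "\<forall>b\<in>D - {a}. \<forall>j<n b. x b j \<in> S b" "mfD (D - {a}) n (contr a n T y) x = v"
    using av unfolding allv_def by blast
  define x' where "x' = x(a := y)"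
  have "mfD D n T x' = mfD (D - {a}) n (contr a n T y) x'"
    using mfD_remove[OF D(2) D(1), of n T x'] by (simp add: x'_def)
  also have "\<dots> = mfD (D - {a}) n (contr a n T y) x"
    by (rule mfD_cong_x) (auto simp: x'_def)
  finally have "mfD D n T x' = v" using x by simp
  moreover have "\<forall>b\<in>D. \<forall>j<n b. x' b j \<in> S b"
    using x(1) y by (auto simp: x'_def)
  ultimately show "\<exists>x. (\<forall>b\<in>D. \<forall>j<n b. x b j \<in> S b) \<and> mfD D n T x = v" by blast
qed

lemma contr_diff:
  assumes "v < n a"
  shows "contr a n T (\<lambda>z. if z = v then t else s) j - contr a n T (\<lambda>z. s) j = T (j(a:=v)) * (t - s)"
proof -
  have "contr a n T (\<lambda>z. if z = v then t else s) j - contr a n T (\<lambda>z. s) j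
      = (\<Sum>z<n a. if z = v then T (j(a:=z)) * (t - s) else 0)"
    unfolding contr_def by (subst sum_subtractf[symmetric], rule sum.cong) (auto simp: algebra_simps)
  also have "\<dots> = T (j(a:=v)) * (t - s)" using assms by simp
  finally show ?thesis .
qed

lemma max_matching:
  assumes bound: "\<And>I (\<tau>::nat \<Rightarrow> nat \<Rightarrow> nat). matching D n T I \<tau> \<Longrightarrow> card I < K"
  shows "\<exists>I (\<tau>::nat \<Rightarrow> nat \<Rightarrow> nat). matching D n T I \<tau> \<and> (\<forall>i\<in>tiD D n. T i \<noteq> 0 \<longrightarrow> (\<exists>b\<in>D. i b \<in> (\<lambda>l. \<tau> l b) ` I))"
proof -
  define M where "M = {card I | I (\<tau>::nat \<Rightarrow> nat \<Rightarrow> nat). matching D n T I \<tau>}"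
  have "M \<subseteq> {..<K}" using bound by (auto simp: M_def)
  hence finM: "finite M" by (rule finite_subset) simp
  have "0 \<in> M" unfolding M_def matching_def
    by (rule CollectI, rule exI[of _ "{}"], rule exI[of _ "\<lambda>_ _. 0"]) simp
  hence "Max M \<in> M" using finM by (intro Max_in) auto
  hence "\<exists>I (\<tau>::nat \<Rightarrow> nat \<Rightarrow> nat). Max M = card I \<and> matching D n T I \<tau>"
    by (simp only: M_def mem_Collect_eq)
  then obtain I and \<tau> :: "nat \<Rightarrow> nat \<Rightarrow> nat" where m: "matching D n T I \<tau>" "card I = Max M"
    by metis
  have cov: "\<exists>b\<in>D. i b \<in> (\<lambda>l. \<tau> l b) ` I" if i: "i \<in> tiD D n" "T i \<noteq> 0" for i
  proof (rule ccontr)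
    assume nc: "\<not> ?thesis"
    have fI: "finite I" using m(1) by (simp add: matching_def)
    obtain l0 where l0: "l0 \<notin> I" using fI by (meson ex_new_if_finite infinite_UNIV_nat)
    define \<tau>' where "\<tau>' = \<tau>(l0 := i)"
    have "matching D n T (insert l0 I) \<tau>'"
      unfolding matching_def
    proof (intro conjI)
      show "finite (insert l0 I)" using fI by simp
      have "\<forall>l\<in>I. \<tau> l \<in> tiD D n \<and> T (\<tau> l) \<noteq> 0" using m(1) by (simp add: matching_def)
      thus "\<forall>l\<in>insert l0 I. \<tau>' l \<in> tiD D n \<and> T (\<tau>' l) \<noteq> 0"
        using i l0 by (simp add: \<tau>'_def)
      show "\<forall>b\<in>D. inj_on (\<lambda>l. \<tau>' l b) (insert l0 I)"
      proof
        fix b assume b: "b \<in> D"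
        have "inj_on (\<lambda>l. \<tau> l b) I" using m(1) b by (simp add: matching_def)
        moreover have "inj_on (\<lambda>l. \<tau>' l b) I = inj_on (\<lambda>l. \<tau> l b) I"
          by (rule inj_on_cong) (use l0 in \<open>auto simp: \<tau>'_def\<close>)
        ultimately have "inj_on (\<lambda>l. \<tau>' l b) I" by simp
        moreover have "\<tau>' l0 b \<notin> (\<lambda>l. \<tau>' l b) ` (I - {l0})"
        proof
          assume "\<tau>' l0 b \<in> (\<lambda>l. \<tau>' l b) ` (I - {l0})"
          then obtain l where "l \<in> I" "l \<noteq> l0" "i b = \<tau> l b" by (auto simp: \<tau>'_def)
          thus False using nc b by blast
        qed
        ultimately show "inj_on (\<lambda>l. \<tau>' l b) (insert l0 I)" by simp
      qed
    qed
    hence "card (insert l0 I) \<in> M" unfolding M_def by blast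
    hence "card (insert l0 I) \<le> Max M" using finM by simp
    thus False using m(2) fI l0 by simp
  qed
  show ?thesis using m cov by blast
qed


fun Rb :: "nat \<Rightarrow> nat \<Rightarrow> nat" where
  "Rb p 0 = 1"
| "Rb p (Suc k) = Suc (Suc k) * (2^(Suc (Suc k)) * p) * (2 * Rb p k)"

lemma rank_bound:
  fixes T :: "(nat \<Rightarrow> nat) \<Rightarrow> 'a::{field,finite}"
  assumes p: "prime p" "CARD('a) = p"
  shows "finite D \<Longrightarrow> card D = Suc k \<Longrightarrow> (\<forall>a\<in>D. s a \<in> S a \<and> t a \<in> S a \<and> s a \<noteq> t a)
    \<Longrightarrow> \<not> allv D n T S \<Longrightarrow> \<exists>m\<le>Rb p k. hasdec D n T m"
proof (induction k arbitrary: D T)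
  case 0
  then obtain a where D: "D = {a}" using card_1_singletonE[of D] by auto
  thus ?case using hasdec_single[OF D] by auto
next
  case (Suc k)
  define K where "K = 2^(Suc (Suc k)) * p"
  have bound: "card I < K" if "matching D n T I \<tau>" for I and \<tau> :: "nat \<Rightarrow> nat \<Rightarrow> nat"
  proof (rule ccontr)
    assume "\<not> card I < K"
    hence "allv D n T S" using matching_allv[OF p Suc.prems(1,2,3) that] K_def by simp
    thus False using Suc.prems(4) by simp
  qed
  obtain I and \<tau> :: "nat \<Rightarrow> nat \<Rightarrow> nat" where m: "matching D n T I \<tau>"
    and cov: "\<forall>i\<in>tiD D n. T i \<noteq> 0 \<longrightarrow> (\<exists>b\<in>D. i b \<in> (\<lambda>l. \<tau> l b) ` I)"
    using max_matching[of D n T K] bound by blast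
  define C where "C b = (\<lambda>l. \<tau> l b) ` I" for b
  have fI: "finite I" using m by (simp add: matching_def)
  have cC: "card (C b) < K" for b
    using bound[OF m] card_image_le[OF fI, of "\<lambda>l. \<tau> l b"] by (simp add: C_def)
  have Cn: "v < n a" if av: "a \<in> D" "v \<in> C a" for a v
  proof -
    obtain l where "l \<in> I" "v = \<tau> l a" using av by (auto simp: C_def)
    moreover have "\<tau> l \<in> tiD D n" using m \<open>l \<in> I\<close> by (simp add: matching_def)
    ultimately show ?thesis using av by (auto simp: tiD_def PiE_iff)
  qed
  have slice: "\<exists>m. m \<le> 2 * Rb p k \<and> hasdec (D - {fst c}) n (\<lambda>j. T (j(fst c := snd c))) m"
    if c: "c \<in> Sigma D C" for c
  proof -
    obtain a v where c': "c = (a, v)" by (cases c)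
    have a: "a \<in> D" and v: "v < n a" using c c' Cn by auto
    define D' where "D' = D - {a}"
    have D': "finite D'" "card D' = Suc k" using Suc.prems(1,2) a by (auto simp: D'_def)
    then obtain a1 where a1: "a1 \<in> D'" by (metis card.empty ex_in_conv nat.distinct(1))
    have sD': "\<forall>b\<in>D'. s b \<in> S b \<and> t b \<in> S b \<and> s b \<noteq> t b" using Suc.prems(3) by (auto simp: D'_def)
    have st: "s a \<in> S a" "t a \<in> S a" "s a \<noteq> t a" using Suc.prems(3) a by auto
    define y0 where "y0 = (\<lambda>z::nat. s a)"
    define y1 where "y1 = (\<lambda>z. if z = v then t a else s a)"
    have na0: "\<not> allv D' n (contr a n T y0) S"
      using allv_lift[OF Suc.prems(1) a, of n y0 S T] st Suc.prems(4) by (auto simp: y0_def D'_def)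
    have "\<forall>z<n a. y1 z \<in> S a" using st by (simp add: y1_def)
    hence na1: "\<not> allv D' n (contr a n T y1) S"
      using allv_lift[OF Suc.prems(1) a, of n y1 S T] Suc.prems(4) by (auto simp: D'_def)
    obtain m0 where m0: "m0 \<le> Rb p k" "hasdec D' n (contr a n T y0) m0"
      using Suc.IH[OF D' sD' na0] by blast
    obtain m1 where m1: "m1 \<le> Rb p k" "hasdec D' n (contr a n T y1) m1"
      using Suc.IH[OF D' sD' na1] by blast
    have "hasdec D' n (\<lambda>j. contr a n T y1 j + (-1) * contr a n T y0 j) (m1 + m0)"
      by (rule hasdec_add[OF m1(2) hasdec_scale[OF m0(2) a1 D'(1)]])
    hence "hasdec D' n (\<lambda>j. inverse (t a - s a) * (contr a n T y1 j + (-1) * contr a n T y0 j)) (m1 + m0)"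
      by (rule hasdec_scale[OF _ a1 D'(1)])
    hence "hasdec D' n (\<lambda>j. T (j(a := v))) (m1 + m0)"
    proof (rule hasdec_cong)
      fix j
      have "contr a n T y1 j + (-1) * contr a n T y0 j = T (j(a:=v)) * (t a - s a)"
        using contr_diff[of v n a T "t a" "s a" j, OF v] by (simp add: y0_def y1_def)
      thus "inverse (t a - s a) * (contr a n T y1 j + (-1) * contr a n T y0 j) = T (j(a := v))"
        using st by (simp add: field_simps)
    qed
    thus ?thesis using m0 m1 c' by (intro exI[of _ "m1 + m0"]) (simp add: D'_def)
  qed
  then obtain mm where mm: "\<And>c. c \<in> Sigma D C \<Longrightarrow> mm c \<le> 2 * Rb p k \<and> hasdec (D - {fst c}) n (\<lambda>j. T (j(fst c := snd c))) (mm c)"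
    by metis
  have fC: "\<And>a. a \<in> D \<Longrightarrow> finite (C a)" using fI by (simp add: C_def)
  have hd: "hasdec D n T (\<Sum>c\<in>Sigma D C. mm c)"
    by (rule hasdec_cover[OF Suc.prems(1) fC]) (use cov mm in \<open>auto simp: C_def\<close>)
  have "(\<Sum>c\<in>Sigma D C. mm c) \<le> (\<Sum>c\<in>Sigma D C. 2 * Rb p k)"
    by (rule sum_mono) (use mm in auto)
  also have "\<dots> = card (Sigma D C) * (2 * Rb p k)" by simp
  also have "card (Sigma D C) = (\<Sum>a\<in>D. card (C a))"
    using Suc.prems(1) fC by (simp add: card_SigmaI)
  also have "(\<Sum>a\<in>D. card (C a)) \<le> (\<Sum>a\<in>D. K)"
    by (rule sum_mono) (use cC in \<open>simp add: less_imp_le\<close>)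
  also have "(\<Sum>a\<in>D. K) = Suc (Suc k) * K" using Suc.prems(2) by simp
  finally have "(\<Sum>c\<in>Sigma D C. mm c) \<le> Suc (Suc k) * K * (2 * Rb p k)"
    by (simp add: mult_right_mono)
  hence "(\<Sum>c\<in>Sigma D C. mm c) \<le> Rb p (Suc k)" by (simp add: K_def)
  thus ?case using hd by blast
qed


lemma two_elems:
  assumes "2 \<le> card A" "x \<in> A"
  shows "\<exists>y\<in>A. y \<noteq> x"
proof (rule ccontr)
  assume "\<not> ?thesis"
  hence "A \<subseteq> {x}" by auto
  hence "card A \<le> 1" using card_mono[of "{x}" A] by simp
  thus False using assms by simp
qed

lemma tiD_tensor_indices: "tiD {..<d} n = tensor_indices d n"
  by (simp add: tiD_def tensor_indices_def atLeast0LessThan)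

lemma mfD_multilinear: "multilinear_form d n T x = mfD {..<d} n T x"
  by (simp add: multilinear_form_def mfD_def tiD_tensor_indices)

theorem proposition6p3:
  fixes p d :: nat
  assumes "prime p" and "p \<ge> 3" and "CARD('a) = p" and "d \<ge> 2"
  shows "\<exists>\<Theta>::nat. \<forall>(n :: nat \<Rightarrow> nat) (T :: (nat \<Rightarrow> nat) \<Rightarrow> 'a::{field,finite}) (S :: nat \<Rightarrow> 'a set).
           tensor_rank d n T \<ge> \<Theta> \<and> (\<forall>a<d. card (S a) \<ge> 2) \<longrightarrow>
           {multilinear_form d n T x | x. \<forall>a<d. \<forall>j<n a. x a j \<in> S a} = (UNIV :: 'a set)"
proof (rule exI[of _ "Rb p (d - 1) + 1"], intro allI impI, elim conjE)
  fix n :: "nat \<Rightarrow> nat" and T :: "(nat \<Rightarrow> nat) \<Rightarrow> 'a" and S :: "nat \<Rightarrow> 'a set"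
  assume rk: "Rb p (d - 1) + 1 \<le> tensor_rank d n T" and cS: "\<forall>a<d. 2 \<le> card (S a)"
  have p: "prime p" "CARD('a) = p" using assms by auto
  define s where "s a = (SOME x. x \<in> S a)" for a
  define t where "t a = (SOME y. y \<in> S a \<and> y \<noteq> s a)" for a
  have st: "\<forall>a\<in>{..<d}. s a \<in> S a \<and> t a \<in> S a \<and> s a \<noteq> t a"
  proof
    fix a assume "a \<in> {..<d}"
    hence c2: "2 \<le> card (S a)" using cS by simp
    hence "S a \<noteq> {}" by auto
    hence sa: "s a \<in> S a" unfolding s_def by (simp add: some_in_eq)
    obtain y where "y \<in> S a" "y \<noteq> s a" using two_elems[OF c2 sa] by blast
    hence "t a \<in> S a \<and> t a \<noteq> s a" unfolding t_def by (rule someI[of _ y, OF conjI])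
    thus "s a \<in> S a \<and> t a \<in> S a \<and> s a \<noteq> t a" using sa by auto
  qed
  show "{multilinear_form d n T x | x. \<forall>a<d. \<forall>j<n a. x a j \<in> S a} = UNIV"
  proof (rule ccontr)
    assume ne: "{multilinear_form d n T x | x. \<forall>a<d. \<forall>j<n a. x a j \<in> S a} \<noteq> UNIV"
    have nav: "\<not> allv {..<d} n T S"
    proof
      assume av: "allv {..<d} n T S"
      have "v \<in> {multilinear_form d n T x | x. \<forall>a<d. \<forall>j<n a. x a j \<in> S a}" for v
      proof -
        obtain x where "\<forall>a\<in>{..<d}. \<forall>j<n a. x a j \<in> S a" "mfD {..<d} n T x = v"
          using av unfolding allv_def by blast
        thus ?thesis by (auto simp: mfD_multilinear)
      qed
      thus False using ne by auto
    qed
    have cd: "card {..<d} = Suc (d - 1)" using assms by simp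
    obtain m where m: "m \<le> Rb p (d - 1)" "hasdec {..<d} n T m"
      using rank_bound[OF p _ cd st nav] by auto
    have "\<exists>f :: nat \<Rightarrow> nat \<Rightarrow> nat \<Rightarrow> 'a. \<forall>i \<in> tensor_indices d n. T i = (\<Sum>r<m. \<Prod>a<d. f r a (i a))"
      using m(2) unfolding hasdec_def tiD_tensor_indices by simp
    hence "tensor_rank d n T \<le> m" unfolding tensor_rank_def by (rule Least_le)
    thus False using m(1) rk by simp
  qed
qed

end
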